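(* Let $P\in\mathbb{C}[y]$ with $\deg P\geq 2$, $\delta\in\mathbb{C}\setminus\{0\}$, $h_1(x,y)=(y,P(y)-\delta x)$, $\theta\in(0,2\pi)\setminus\{\frac{\pi}{2},\pi,\frac{3\pi}{2}\}$, $R_\theta$ the linear map of $\mathbb{C}^2$ with matrix $\begin{pmatrix}\cos\theta&-\sin\theta\\ \sin\theta&\cos\theta\end{pmatrix}$, $h_2=R_\theta^{-1}\circ h_1\circ R_\theta$ and $G=\langle h_1,h_2\rangle$. Let $\nu=a_1\delta_{h_1}+a_2\delta_{h_2}+a_3\delta_{h_1^{-1}}+a_4\delta_{h_2^{-1}}$ with $a_i>0$ for each $i$ and $\sum_{i=1}^4a_i=1$. If $\mu$ is a $\nu$-stationary Borel probability measure on $\mathbb{C}^2$, then $\operatorname{supp}\mu$ is compact.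
   Context: A Borel probability measure $\mu$ on $\mathbb{C}^2$ is $\nu$-stationary if $\mu=\int_G g_*\mu\,d\nu(g)$, i.e. here $\mu=a_1(h_1)_*\mu+a_2(h_2)_*\mu+a_3(h_1^{-1})_*\mu+a_4(h_2^{-1})_*\mu$; equivalently $\int f\,d\mu=\int_G\int f(g\cdot x)\,d\mu(x)\,d\nu(g)$ for all compactly supported continuous $f$. *)

theory Defs
  imports "HOL-Probability.Probability" "HOL-Computational_Algebra.Polynomial"
begin

definition henon :: "complex poly \<Rightarrow> complex \<Rightarrow> complex \<times> complex \<Rightarrow> complex \<times> complex" where
  "henon P \<delta> = (\<lambda>(x, y). (y, poly P y - \<delta> * x))"

definition rot :: "real \<Rightarrow> complex \<times> complex \<Rightarrow> complex \<times> complex" where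
  "rot t = (\<lambda>(x, y). (complex_of_real (cos t) * x - complex_of_real (sin t) * y,
                       complex_of_real (sin t) * x + complex_of_real (cos t) * y))"

definition measure_support :: "'a::topological_space measure \<Rightarrow> 'a set" where
  "measure_support \<mu> = {x. \<forall>U. open U \<and> x \<in> U \<longrightarrow> emeasure \<mu> U > 0}"

end

theory Submission
  imports Defs "HOL-Computational_Algebra.Fundamental_Theorem_Algebra"
begin


lemma poly_growth:
  fixes P :: "complex poly"
  assumes "degree P \<ge> 2"
  shows "\<exists>r. \<forall>z. r \<le> norm z \<longrightarrow> A * norm z + B \<le> norm (poly P z)"
proof -
  obtain c0 P1 where P: "P = pCons c0 P1" by (cases P) auto
  obtain c1 Q where P1: "P1 = pCons c1 Q" by (cases P1) auto
  have "Q \<noteq> 0" using assms P P1 by (auto split: if_splits)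
  then obtain r where r: "\<forall>z. r \<le> norm z \<longrightarrow> \<bar>A\<bar> + 1 \<le> norm (poly (pCons c1 Q) z)"
    using poly_infinity by blast
  show ?thesis
  proof (intro exI allI impI)
    fix z :: complex
    assume z: "max r (max 0 (norm c0 + \<bar>B\<bar>)) \<le> norm z"
    have "(\<bar>A\<bar> + 1) * norm z \<le> norm (poly (pCons c1 Q) z) * norm z"
      using r z by (intro mult_right_mono) auto
    also have "\<dots> = norm (z * poly (pCons c1 Q) z)" by (simp add: norm_mult)
    also have "\<dots> \<le> norm (poly P z) + norm c0"
      using norm_triangle_ineq4[of "poly P z" c0] by (simp add: P P1 algebra_simps)
    finally have "(\<bar>A\<bar> + 1) * norm z \<le> norm (poly P z) + norm c0" .
    moreover have "A * norm z \<le> \<bar>A\<bar> * norm z" by (intro mult_right_mono) auto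
    ultimately show "A * norm z + B \<le> norm (poly P z)" using z by (auto simp: algebra_simps)
  qed
qed



definition NN :: "complex \<times> complex \<Rightarrow> real" where
  "NN p = max (norm (fst p)) (norm (snd p))"

definition kinv :: "complex poly \<Rightarrow> complex \<Rightarrow> complex \<times> complex \<Rightarrow> complex \<times> complex" where
  "kinv P \<delta> = (\<lambda>(x, y). ((poly P x - y) / \<delta>, x))"

definition B1 :: "real \<Rightarrow> (complex \<times> complex) set" where
  "B1 k = {p. norm (snd p) \<le> k * norm (fst p)}"
definition A1 :: "real \<Rightarrow> (complex \<times> complex) set" where
  "A1 k = {p. norm (fst p) \<le> k * norm (snd p)}"

lemma henon_expand:
  fixes P :: "complex poly"
  assumes "degree P \<ge> 2" "0 < k" "k < 1" "0 \<le> M"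
  shows "\<exists>R0. \<forall>p. R0 < NN p \<longrightarrow> p \<notin> B1 k \<longrightarrow> M * NN p + M \<le> NN (henon P \<delta> p)"
proof -
  obtain r where r: "\<forall>z. r \<le> norm z \<longrightarrow> ((norm \<delta> + M) / k) * norm z + M \<le> norm (poly P z)"
    using poly_growth[OF assms(1)] by blast
  show ?thesis
  proof (intro exI allI impI)
    fix p :: "complex \<times> complex"
    assume p1: "max (r / k) 0 < NN p" and p2: "p \<notin> B1 k"
    obtain x y where p: "p = (x, y)" by (cases p)
    have yx: "k * norm x < norm y" using p2 p by (simp add: B1_def)
    have Nle: "NN p \<le> norm y / k"
    proof (cases "norm x \<le> norm y")
      case True
      then have "NN p = norm y" by (simp add: NN_def p)
      moreover have "norm y \<le> norm y / k" using assms(2,3) mult_right_mono[of k 1 "norm y"] by (simp add: field_simps)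
      ultimately show ?thesis by simp
    next
      case False
      then have "NN p = norm x" by (simp add: NN_def p)
      then show ?thesis using yx assms(2) by (simp add: field_simps)
    qed
    have xle: "norm x \<le> norm y / k" using yx assms(2) by (simp add: field_simps)
    have "r / k < norm y / k" using p1 Nle by linarith
    then have "r \<le> norm y" using assms(2) by (simp add: divide_right_mono_neg divide_less_cancel)
    then have Py: "((norm \<delta> + M) / k) * norm y + M \<le> norm (poly P y)" using r by blast
    have "norm (\<delta> * x) \<le> norm \<delta> * (norm y / k)"
      unfolding norm_mult using xle by (intro mult_left_mono) auto
    moreover have "norm (poly P y) - norm (\<delta> * x) \<le> norm (poly P y - \<delta> * x)"
      by (rule norm_triangle_ineq2)
    moreover have "norm (poly P y - \<delta> * x) \<le> NN (henon P \<delta> p)"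
      by (simp add: NN_def henon_def p)
    moreover have "M * NN p \<le> M * (norm y / k)" using Nle assms(4) by (intro mult_left_mono)
    moreover have "((norm \<delta> + M) / k) * norm y = norm \<delta> * (norm y / k) + M * (norm y / k)"
      using assms(2) by (simp add: field_simps)
    ultimately show "M * NN p + M \<le> NN (henon P \<delta> p)"
      using Py by linarith
  qed
qed

lemma kinv_expand:
  fixes P :: "complex poly"
  assumes "degree P \<ge> 2" "0 < k" "k < 1" "0 \<le> M" "\<delta> \<noteq> 0"
  shows "\<exists>R0. \<forall>p. R0 < NN p \<longrightarrow> p \<notin> A1 k \<longrightarrow> M * NN p + M \<le> NN (kinv P \<delta> p)"
proof -
  obtain r where r: "\<forall>z. r \<le> norm z \<longrightarrow> ((1 + norm \<delta> * M) / k) * norm z + norm \<delta> * M \<le> norm (poly P z)"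
    using poly_growth[OF assms(1)] by blast
  show ?thesis
  proof (intro exI allI impI)
    fix p :: "complex \<times> complex"
    assume p1: "max (r / k) 0 < NN p" and p2: "p \<notin> A1 k"
    obtain x y where p: "p = (x, y)" by (cases p)
    have yx: "k * norm y < norm x" using p2 p by (simp add: A1_def)
    have Nle: "NN p \<le> norm x / k"
    proof (cases "norm y \<le> norm x")
      case True
      then have "NN p = norm x" by (simp add: NN_def p)
      moreover have "norm x \<le> norm x / k" using assms(2,3) mult_right_mono[of k 1 "norm x"] by (simp add: field_simps)
      ultimately show ?thesis by simp
    next
      case False
      then have "NN p = norm y" by (simp add: NN_def p)
      then show ?thesis using yx assms(2) by (simp add: field_simps)
    qed
    have yle: "norm y \<le> norm x / k" using yx assms(2) by (simp add: field_simps)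
    have "r / k < norm x / k" using p1 Nle by linarith
    then have "r \<le> norm x" using assms(2) by (simp add: divide_less_cancel)
    then have Px: "((1 + norm \<delta> * M) / k) * norm x + norm \<delta> * M \<le> norm (poly P x)" using r by blast
    have "norm (poly P x) - norm y \<le> norm (poly P x - y)"
      by (rule norm_triangle_ineq2)
    moreover have "norm ((poly P x - y) / \<delta>) \<le> NN (kinv P \<delta> p)"
      by (simp add: NN_def kinv_def p)
    moreover have "norm ((poly P x - y) / \<delta>) = norm (poly P x - y) / norm \<delta>"
      by (simp add: norm_divide)
    moreover have "M * NN p \<le> M * (norm x / k)" using Nle assms(4) by (intro mult_left_mono)
    moreover have "0 < norm \<delta>" using assms(5) by simp
    moreover have "((1 + norm \<delta> * M) / k) * norm x = norm x / k + norm \<delta> * (M * (norm x / k))"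
      using assms(2) by (simp add: field_simps)
    moreover have "norm \<delta> * (M * NN p) \<le> norm \<delta> * (M * (norm x / k))"
      using \<open>M * NN p \<le> M * (norm x / k)\<close> by (rule mult_left_mono) simp_all
    ultimately have "norm \<delta> * (M * NN p + M) \<le> norm (poly P x - y)"
      using Px yle by (simp add: algebra_simps)
    then have "M * NN p + M \<le> norm (poly P x - y) / norm \<delta>"
      using \<open>0 < norm \<delta>\<close> by (simp add: pos_le_divide_eq mult.commute)
    then show "M * NN p + M \<le> NN (kinv P \<delta> p)"
      using \<open>norm ((poly P x - y) / \<delta>) \<le> NN (kinv P \<delta> p)\<close> \<open>norm ((poly P x - y) / \<delta>) = _\<close> by linarith
  qed
qed



lemma rot_rot_neg: "rot (-t) (rot t p) = p"
proof -
  obtain x y where p: "p = (x, y)" by (cases p)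
  have e: "complex_of_real (cos t) * complex_of_real (cos t) + complex_of_real (sin t) * complex_of_real (sin t) = 1"
    by (metis of_real_add of_real_mult of_real_1 sin_cos_squared_add3 add.commute)
  have "complex_of_real (cos t) * (complex_of_real (cos t) * x - complex_of_real (sin t) * y) +
        complex_of_real (sin t) * (complex_of_real (sin t) * x + complex_of_real (cos t) * y) =
        (complex_of_real (cos t) * complex_of_real (cos t) + complex_of_real (sin t) * complex_of_real (sin t)) * x"
    by (simp add: algebra_simps)
  moreover have "- (complex_of_real (sin t) * (complex_of_real (cos t) * x - complex_of_real (sin t) * y)) +
        complex_of_real (cos t) * (complex_of_real (sin t) * x + complex_of_real (cos t) * y) =
        (complex_of_real (cos t) * complex_of_real (cos t) + complex_of_real (sin t) * complex_of_real (sin t)) * y"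
    by (simp add: algebra_simps)
  ultimately show ?thesis using e by (simp add: rot_def p)
qed

lemma rot_neg_rot: "rot t (rot (-t) p) = p"
  using rot_rot_neg[of "-t" p] by simp

lemma inv_rot: "inv (rot t) = rot (-t)"
  by (rule inv_equality) (simp_all add: rot_rot_neg rot_neg_rot)

lemma NN_nonneg: "0 \<le> NN p" by (simp add: NN_def le_max_iff_disj)

lemma NN_rot: "NN (rot t p) \<le> 2 * NN p"
proof -
  obtain x y where p: "p = (x, y)" by (cases p)
  have c: "norm (complex_of_real (cos t)) \<le> 1" "norm (complex_of_real (sin t)) \<le> 1" by auto
  have x: "norm x \<le> NN p" and y: "norm y \<le> NN p" by (auto simp: NN_def p)
  have m1: "norm (complex_of_real (cos t) * x) \<le> NN p"
    unfolding norm_mult using c x by (metis mult_le_one norm_ge_zero order.trans mult_right_mono mult_1_left)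
  have m2: "norm (complex_of_real (sin t) * y) \<le> NN p"
    unfolding norm_mult using c y by (metis norm_ge_zero order.trans mult_right_mono mult_1_left)
  have m3: "norm (complex_of_real (sin t) * x) \<le> NN p"
    unfolding norm_mult using c x by (metis norm_ge_zero order.trans mult_right_mono mult_1_left)
  have m4: "norm (complex_of_real (cos t) * y) \<le> NN p"
    unfolding norm_mult using c y by (metis norm_ge_zero order.trans mult_right_mono mult_1_left)
  have "norm (complex_of_real (cos t) * x - complex_of_real (sin t) * y) \<le> 2 * NN p"
    using norm_triangle_ineq4[of "complex_of_real (cos t) * x" "complex_of_real (sin t) * y"] m1 m2 by linarith
  moreover have "norm (complex_of_real (sin t) * x + complex_of_real (cos t) * y) \<le> 2 * NN p"
    using norm_triangle_ineq[of "complex_of_real (sin t) * x" "complex_of_real (cos t) * y"] m3 m4 by linarith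
  ultimately show ?thesis by (simp add: NN_def rot_def p)
qed

lemma NN_rot_ge: "NN p \<le> 2 * NN (rot t p)"
  using NN_rot[of "-t" "rot t p"] by (simp add: rot_rot_neg)

lemma NN_rot_neg_ge: "NN q \<le> 2 * NN (rot (-t) q)"
  using NN_rot[of "t" "rot (-t) q"] by (simp add: rot_neg_rot)

lemma henon_kinv: "\<delta> \<noteq> 0 \<Longrightarrow> henon P \<delta> (kinv P \<delta> p) = p"
  by (cases p) (simp add: henon_def kinv_def)

lemma kinv_henon: "\<delta> \<noteq> 0 \<Longrightarrow> kinv P \<delta> (henon P \<delta> p) = p"
  by (cases p) (simp add: henon_def kinv_def)

lemma inv_henon: "\<delta> \<noteq> 0 \<Longrightarrow> inv (henon P \<delta>) = kinv P \<delta>"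
  by (rule inv_equality) (simp_all add: henon_kinv kinv_henon)

lemma inv_h2: "\<delta> \<noteq> 0 \<Longrightarrow> inv (rot (-t) \<circ> henon P \<delta> \<circ> rot t) = rot (-t) \<circ> kinv P \<delta> \<circ> rot t"
  by (rule inv_equality) (simp_all add: henon_kinv kinv_henon rot_rot_neg rot_neg_rot)

lemma cone_lemma:
  fixes x y :: complex and al be ga ep k :: real
  assumes "norm y \<le> k * norm x" "norm (of_real al * x + of_real be * y) \<le> k * norm (of_real ga * x + of_real ep * y)"
    "\<bar>be\<bar> \<le> 1" "\<bar>ga\<bar> \<le> 1" "\<bar>ep\<bar> \<le> 1" "0 \<le> k" "4 * k \<le> \<bar>al\<bar>" "k \<le> 1/4" "0 < k"
  shows "x = 0"
proof -
  have "norm (of_real be * y) \<le> k * norm x"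
    using assms(1,3) by (simp add: norm_mult) (metis abs_ge_zero mult_left_le_one_le norm_ge_zero order.trans)
  then have l: "\<bar>al\<bar> * norm x - k * norm x \<le> norm (of_real al * x + of_real be * y)"
    using norm_triangle_ineq2[of "of_real al * x" "- (of_real be * y)"] by (simp add: norm_mult)
  have "norm (of_real ep * y) \<le> k * norm x"
    using assms(1,5) by (simp add: norm_mult) (metis abs_ge_zero mult_left_le_one_le norm_ge_zero order.trans)
  moreover have "norm (of_real ga * x) \<le> norm x"
    using assms(4) by (simp add: norm_mult mult_left_le_one_le)
  ultimately have "norm (of_real ga * x + of_real ep * y) \<le> norm x + k * norm x"
    using norm_triangle_ineq[of "of_real ga * x" "of_real ep * y"] by linarith
  then have "k * norm (of_real ga * x + of_real ep * y) \<le> k * (norm x + k * norm x)"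
    using assms(6) by (rule mult_left_mono)
  then have "\<bar>al\<bar> * norm x - k * norm x \<le> k * (norm x + k * norm x)" using l assms(2) by linarith
  then have "(\<bar>al\<bar> - 2 * k - k * k) * norm x \<le> 0" by (simp add: algebra_simps)
  moreover have "\<bar>al\<bar> - 2 * k - k * k > 0"
  proof -
    have "k * k \<le> k * (1/4)" using assms(6,8) by (rule mult_left_mono[rotated])
    then show ?thesis using assms(7,9) by linarith
  qed
  ultimately have "norm x \<le> 0" by (simp add: mult_le_0_iff)
  then show ?thesis by simp
qed



definition gmap :: "complex poly \<Rightarrow> complex \<Rightarrow> real \<Rightarrow> nat \<Rightarrow> complex \<times> complex \<Rightarrow> complex \<times> complex" where
  "gmap P \<delta> t j = (if j = 0 then henon P \<delta> else if j = 1 then rot (-t) \<circ> henon P \<delta> \<circ> rot t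
     else if j = 2 then kinv P \<delta> else rot (-t) \<circ> kinv P \<delta> \<circ> rot t)"

definition Rep :: "real \<Rightarrow> real \<Rightarrow> nat \<Rightarrow> (complex \<times> complex) set" where
  "Rep k t j = (if j = 0 then B1 k else if j = 1 then {p. rot t p \<in> B1 k}
     else if j = 2 then A1 k else {p. rot t p \<in> A1 k})"

definition bar :: "nat \<Rightarrow> nat" where "bar j = (j + 2) mod 4"

lemma lt4_cases: "(j::nat) < 4 \<Longrightarrow> j = 0 \<or> j = 1 \<or> j = 2 \<or> j = 3" by auto

lemma bar_lt: "j < 4 \<Longrightarrow> bar j < 4" by (simp add: bar_def)
lemma bar_bar: "j < 4 \<Longrightarrow> bar (bar j) = j" using lt4_cases[of j] by (auto simp: bar_def)
lemma bar_neq: "j < 4 \<Longrightarrow> bar j \<noteq> j" using lt4_cases[of j] unfolding bar_def by presburger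

lemma gmap_inv: "\<delta> \<noteq> 0 \<Longrightarrow> j < 4 \<Longrightarrow> gmap P \<delta> t (bar j) (gmap P \<delta> t j p) = p"
  using lt4_cases[of j] by (auto simp: gmap_def bar_def henon_kinv kinv_henon rot_rot_neg rot_neg_rot)

lemma rot_eq_0: "rot t p = 0 \<Longrightarrow> p = 0"
  using rot_rot_neg[of t p] by (simp add: rot_def zero_prod_def)

lemma A1_B1: "0 < k \<Longrightarrow> k < 1 \<Longrightarrow> p \<in> A1 k \<Longrightarrow> p \<in> B1 k \<Longrightarrow> p = 0"
proof -
  assume k: "0 < k" "k < 1" and a: "p \<in> A1 k" and b: "p \<in> B1 k"
  have "norm (fst p) \<le> k * (k * norm (fst p))" using a b k
    by (simp add: A1_def B1_def) (meson mult_left_mono order.trans less_imp_le)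
  then have "(1 - k * k) * norm (fst p) \<le> 0" by (simp add: algebra_simps)
  moreover have "k * k < 1" using k by (metis mult_strict_mono' mult_1_right less_imp_le)
  ultimately have "norm (fst p) = 0" by (simp add: mult_le_0_iff)
  then show "p = 0" using b by (cases p) (simp add: B1_def zero_prod_def)
qed

context
  fixes t k :: real
  assumes s0: "sin t \<noteq> 0" and c0: "cos t \<noteq> 0"
    and kdef: "k = min \<bar>sin t\<bar> \<bar>cos t\<bar> / 4"
begin

lemma k_pos: "0 < k" using s0 c0 kdef by simp
lemma k_le: "k \<le> 1/4" using kdef abs_sin_le_one[of t] by (simp add: min_def)
lemma k_s: "4 * k \<le> \<bar>sin t\<bar>" using kdef by simp
lemma k_c: "4 * k \<le> \<bar>cos t\<bar>" using kdef by simp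
lemma k_ms: "4 * k \<le> \<bar>- sin t\<bar>" using kdef by simp

lemma B1_Rep1: "p \<in> B1 k \<Longrightarrow> rot t p \<in> B1 k \<Longrightarrow> p = 0"
proof -
  assume a: "p \<in> B1 k" "rot t p \<in> B1 k"
  obtain x y where p: "p = (x, y)" by (cases p)
  have "x = 0"
    apply (rule cone_lemma[where al = "sin t" and be = "cos t" and ga = "cos t" and ep = "- sin t" and y = y and k = k])
    using a k_pos k_le k_s by (auto simp: B1_def rot_def p)
  then show ?thesis using a by (simp add: B1_def p zero_prod_def)
qed

lemma B1_Rep3: "p \<in> B1 k \<Longrightarrow> rot t p \<in> A1 k \<Longrightarrow> p = 0"
proof -
  assume a: "p \<in> B1 k" "rot t p \<in> A1 k"
  obtain x y where p: "p = (x, y)" by (cases p)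
  have "x = 0"
    apply (rule cone_lemma[where al = "cos t" and be = "- sin t" and ga = "sin t" and ep = "cos t" and y = y and k = k])
    using a k_pos k_le k_c by (auto simp: B1_def A1_def rot_def p)
  then show ?thesis using a by (simp add: B1_def p zero_prod_def)
qed

lemma A1_Rep1: "p \<in> A1 k \<Longrightarrow> rot t p \<in> B1 k \<Longrightarrow> p = 0"
proof -
  assume a: "p \<in> A1 k" "rot t p \<in> B1 k"
  obtain x y where p: "p = (x, y)" by (cases p)
  have "y = 0"
    apply (rule cone_lemma[where al = "cos t" and be = "sin t" and ga = "- sin t" and ep = "cos t" and y = x and k = k])
    using a k_pos k_le k_c by (auto simp: B1_def A1_def rot_def p algebra_simps)
  then show ?thesis using a by (simp add: A1_def p zero_prod_def)
qed

lemma A1_Rep3: "p \<in> A1 k \<Longrightarrow> rot t p \<in> A1 k \<Longrightarrow> p = 0"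
proof -
  assume a: "p \<in> A1 k" "rot t p \<in> A1 k"
  obtain x y where p: "p = (x, y)" by (cases p)
  have "y = 0"
    apply (rule cone_lemma[where al = "- sin t" and be = "cos t" and ga = "cos t" and ep = "sin t" and y = x and k = k])
    using a k_pos k_le k_ms by (auto simp: B1_def A1_def rot_def p algebra_simps)
  then show ?thesis using a by (simp add: A1_def p zero_prod_def)
qed

lemma Rep_disj: "p \<noteq> 0 \<Longrightarrow> i < 4 \<Longrightarrow> j < 4 \<Longrightarrow> p \<in> Rep k t i \<Longrightarrow> p \<in> Rep k t j \<Longrightarrow> i = j"
proof -
  assume p: "p \<noteq> 0" and ij: "i < 4" "j < 4" and pi: "p \<in> Rep k t i" and pj: "p \<in> Rep k t j"
  have k1: "k < 1" using k_le by simp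
  have rp: "rot t p \<noteq> 0" using p rot_eq_0 by blast
  have c: "\<And>a b. a < 4 \<Longrightarrow> b < 4 \<Longrightarrow> a \<noteq> b \<Longrightarrow> p \<in> Rep k t a \<Longrightarrow> p \<in> Rep k t b \<Longrightarrow> False"
  proof -
    fix a b :: nat assume ab: "a < 4" "b < 4" "a \<noteq> b" "p \<in> Rep k t a" "p \<in> Rep k t b"
    have "a = 0 \<or> a = 1 \<or> a = 2 \<or> a = 3" "b = 0 \<or> b = 1 \<or> b = 2 \<or> b = 3" using ab by auto
    moreover have "p \<in> B1 k \<Longrightarrow> rot t p \<in> B1 k \<Longrightarrow> False" using B1_Rep1 p by blast
    moreover have "p \<in> B1 k \<Longrightarrow> rot t p \<in> A1 k \<Longrightarrow> False" using B1_Rep3 p by blast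
    moreover have "p \<in> A1 k \<Longrightarrow> rot t p \<in> B1 k \<Longrightarrow> False" using A1_Rep1 p by blast
    moreover have "p \<in> A1 k \<Longrightarrow> rot t p \<in> A1 k \<Longrightarrow> False" using A1_Rep3 p by blast
    moreover have "p \<in> A1 k \<Longrightarrow> p \<in> B1 k \<Longrightarrow> False" using A1_B1[OF k_pos k1, of p] p by blast
    moreover have "rot t p \<in> A1 k \<Longrightarrow> rot t p \<in> B1 k \<Longrightarrow> False" using A1_B1[OF k_pos k1, of "rot t p"] rp by blast
    ultimately show False using ab by (auto simp: Rep_def)
  qed
  show "i = j" using c[OF ij _ pi pj] by blast
qed

end



lemma expand_all:
  fixes P :: "complex poly"
  assumes deg: "degree P \<ge> 2" and d0: "\<delta> \<noteq> 0" and k: "0 < k" "k < 1"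
  shows "\<exists>R>0. \<forall>j<4. \<forall>p. R < NN p \<longrightarrow> p \<notin> Rep k t j \<longrightarrow> NN p + 1 \<le> NN (gmap P \<delta> t j p)"
proof -
  obtain R1 where R1: "\<forall>p. R1 < NN p \<longrightarrow> p \<notin> B1 k \<longrightarrow> 1 * NN p + 1 \<le> NN (henon P \<delta> p)"
    using henon_expand[OF deg k, where M=1 and \<delta>=\<delta>] by auto
  obtain R2 where R2: "\<forall>p. R2 < NN p \<longrightarrow> p \<notin> A1 k \<longrightarrow> 1 * NN p + 1 \<le> NN (kinv P \<delta> p)"
    using kinv_expand[OF deg k _ d0, where M=1] by auto
  obtain R3 where R3: "\<forall>p. R3 < NN p \<longrightarrow> p \<notin> B1 k \<longrightarrow> 4 * NN p + 4 \<le> NN (henon P \<delta> p)"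
    using henon_expand[OF deg k, where M=4 and \<delta>=\<delta>] by auto
  obtain R4 where R4: "\<forall>p. R4 < NN p \<longrightarrow> p \<notin> A1 k \<longrightarrow> 4 * NN p + 4 \<le> NN (kinv P \<delta> p)"
    using kinv_expand[OF deg k _ d0, where M=4] by auto
  define R where "R = max 1 (max R1 (max R2 (max (2 * R3) (2 * R4))))"
  have "R > 0" by (simp add: R_def)
  moreover have "\<forall>j<4. \<forall>p. R < NN p \<longrightarrow> p \<notin> Rep k t j \<longrightarrow> NN p + 1 \<le> NN (gmap P \<delta> t j p)"
  proof (intro allI impI)
    fix j p assume j: "j < 4" and pR: "R < NN p" and pn: "p \<notin> Rep k t j"
    let ?G = "NN p + 1 \<le> NN (gmap P \<delta> t j p)"
    have "j = 0 \<or> j = 1 \<or> j = 2 \<or> j = 3" using j by auto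
    moreover
    { assume "j = 0"
      then have ?G using R1[rule_format, of p] pR pn by (auto simp: R_def gmap_def Rep_def) }
    moreover
    { assume "j = 2"
      then have ?G using R2[rule_format, of p] pR pn by (auto simp: R_def gmap_def Rep_def) }
    moreover
    { assume j1: "j = 1"
      define q where "q = rot t p"
      have qB: "q \<notin> B1 k" using pn j1 by (simp add: Rep_def q_def)
      have "NN p \<le> 2 * NN q" unfolding q_def by (rule NN_rot_ge)
      then have "R3 < NN q" using pR by (simp add: R_def)
      then have h: "4 * NN q + 4 \<le> NN (henon P \<delta> q)" using R3 qB by blast
      have "NN (henon P \<delta> q) \<le> 2 * NN (rot (-t) (henon P \<delta> q))" by (rule NN_rot_neg_ge)
      then have ?G using h \<open>NN p \<le> 2 * NN q\<close> j1 by (simp add: gmap_def q_def) }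
    moreover
    { assume j3: "j = 3"
      define q where "q = rot t p"
      have qB: "q \<notin> A1 k" using pn j3 by (simp add: Rep_def q_def)
      have "NN p \<le> 2 * NN q" unfolding q_def by (rule NN_rot_ge)
      then have "R4 < NN q" using pR by (simp add: R_def)
      then have h: "4 * NN q + 4 \<le> NN (kinv P \<delta> q)" using R4 qB by blast
      have "NN (kinv P \<delta> q) \<le> 2 * NN (rot (-t) (kinv P \<delta> q))" by (rule NN_rot_neg_ge)
      then have ?G using h \<open>NN p \<le> 2 * NN q\<close> j3 by (simp add: gmap_def q_def) }
    ultimately show "NN p + 1 \<le> NN (gmap P \<delta> t j p)" by blast
  qed
  ultimately show ?thesis by blast
qed



lemma stat_nn:
  fixes \<mu> :: "'a::topological_space measure" and g :: "nat \<Rightarrow> 'a \<Rightarrow> 'a" and a :: "nat \<Rightarrow> real"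
    and f :: "'a \<Rightarrow> ennreal"
  assumes sets: "sets \<mu> = sets borel"
    and gm: "\<And>j. g j \<in> borel \<rightarrow>\<^sub>M borel"
    and st: "\<forall>A \<in> sets borel. emeasure \<mu> A = (\<Sum>j<4. ennreal (a j) * emeasure (distr \<mu> borel (g j)) A)"
    and f: "f \<in> borel_measurable borel"
  shows "(\<integral>\<^sup>+x. f x \<partial>\<mu>) = (\<Sum>j<4. ennreal (a j) * (\<integral>\<^sup>+x. f x \<partial>distr \<mu> borel (g j)))"
  using f
proof (induction rule: borel_measurable_induct)
  case (cong f h)
  then have "f = h" by auto
  then show ?case using cong by simp
next
  case (set A)
  then show ?case using st sets by (simp add: sets_distr)
next
  case (mult u c)
  have m: "u \<in> borel_measurable \<mu>" by (subst measurable_cong_sets[OF sets refl]) (rule mult(2))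
  have md: "\<And>j. u \<in> borel_measurable (distr \<mu> borel (g j))" using mult(2) by simp
  show ?case
    by (simp add: nn_integral_cmult[OF m] nn_integral_cmult[OF md] mult(4) sum_distrib_left
        mult.left_commute)
next
  case (add u v)
  have m1: "u \<in> borel_measurable \<mu>" by (subst measurable_cong_sets[OF sets refl]) (use add in blast)
  have m2: "v \<in> borel_measurable \<mu>" by (subst measurable_cong_sets[OF sets refl]) (use add in blast)
  note m = m1 m2
  have md: "\<And>j. u \<in> borel_measurable (distr \<mu> borel (g j))" "\<And>j. v \<in> borel_measurable (distr \<mu> borel (g j))"
    using add by auto
  show ?case
    by (simp add: nn_integral_add[OF m(2) m(1)] nn_integral_add[OF md(2) md(1)] add.IH
        sum.distrib distrib_left)
next
  case (seq U)
  have inc: "incseq U" using seq by blast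
  have m: "\<And>i. U i \<in> borel_measurable \<mu>"
    by (subst measurable_cong_sets[OF sets refl]) (rule seq(1))
  have md: "\<And>i j. U i \<in> borel_measurable (distr \<mu> borel (g j))" using seq(1) by simp
  have "(\<integral>\<^sup>+x. (SUP i. U i) x \<partial>\<mu>) = (SUP i. integral\<^sup>N \<mu> (U i))"
    unfolding SUP_apply by (rule nn_integral_monotone_convergence_SUP[OF inc m])
  also have "\<dots> = (SUP i. \<Sum>j<4. ennreal (a j) * integral\<^sup>N (distr \<mu> borel (g j)) (U i))"
    using seq.IH by simp
  also have "\<dots> = (\<Sum>j<4. SUP i. ennreal (a j) * integral\<^sup>N (distr \<mu> borel (g j)) (U i))"
  proof (rule ennreal_SUP_sum)
    fix j show "incseq (\<lambda>i. ennreal (a j) * integral\<^sup>N (distr \<mu> borel (g j)) (U i))"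
      using incseq_nn_integral[OF inc, of "distr \<mu> borel (g j)"]
      by (auto simp: incseq_def intro: mult_left_mono)
  qed
  also have "\<dots> = (\<Sum>j<4. ennreal (a j) * (SUP i. integral\<^sup>N (distr \<mu> borel (g j)) (U i)))"
    by (simp add: SUP_mult_left_ennreal)
  also have "\<dots> = (\<Sum>j<4. ennreal (a j) * (\<integral>\<^sup>+x. (SUP i. U i) x \<partial>distr \<mu> borel (g j)))"
    unfolding SUP_apply
    by (subst nn_integral_monotone_convergence_SUP[OF inc md]) simp
  finally show ?case .
qed



lemma lyap_null:
  fixes \<mu> :: "'a::topological_space measure" and g :: "nat \<Rightarrow> 'a \<Rightarrow> 'a" and a :: "nat \<Rightarrow> real"
    and V :: "'a \<Rightarrow> real"
  assumes sets: "sets \<mu> = sets borel" and prob: "prob_space \<mu>"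
    and gm: "\<And>j. g j \<in> borel \<rightarrow>\<^sub>M borel"
    and a: "\<And>j. 0 \<le> a j"
    and st: "\<forall>A \<in> sets borel. emeasure \<mu> A = (\<Sum>j<4. ennreal (a j) * emeasure (distr \<mu> borel (g j)) A)"
    and Vm: "V \<in> borel_measurable borel" and V0: "\<And>x. 0 \<le> V x"
    and PV: "\<And>x. (\<Sum>j<4. a j * V (g j x)) \<le> V x"
    and U: "U \<in> sets borel" and PVU: "\<And>x. x \<in> U \<Longrightarrow> (\<Sum>j<4. a j * V (g j x)) < V x"
    and V1: "\<And>x. V x \<le> 1"
  shows "emeasure \<mu> U = 0"
proof -
  have sp: "space \<mu> = UNIV" using sets_eq_imp_space_eq[OF sets] by simp
  have mm: "\<And>h :: 'a \<Rightarrow> ennreal. h \<in> borel_measurable borel \<Longrightarrow> h \<in> borel_measurable \<mu>"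
    by (subst measurable_cong_sets[OF sets refl])
  have gmu: "\<And>j. g j \<in> \<mu> \<rightarrow>\<^sub>M borel" by (subst measurable_cong_sets[OF sets refl]) (rule gm)
  define PVf where "PVf x = (\<Sum>j<4. a j * V (g j x))" for x
  have PV0: "0 \<le> PVf x" for x unfolding PVf_def using a V0 by (intro sum_nonneg mult_nonneg_nonneg) auto
  have Fm: "(\<lambda>x. ennreal (V x)) \<in> borel_measurable borel" using Vm by measurable
  have PVm: "PVf \<in> borel_measurable borel" unfolding PVf_def using Vm gm by measurable
  have Vmu[measurable]: "V \<in> borel_measurable \<mu>" by (subst measurable_cong_sets[OF sets refl]) (rule Vm)
  have PVmu[measurable]: "PVf \<in> borel_measurable \<mu>" by (subst measurable_cong_sets[OF sets refl]) (rule PVm)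
  note [measurable] = gmu Vm
  have "(\<integral>\<^sup>+x. ennreal (V x) \<partial>\<mu>) = (\<Sum>j<4. ennreal (a j) * (\<integral>\<^sup>+x. ennreal (V x) \<partial>distr \<mu> borel (g j)))"
    by (rule stat_nn[OF sets gm st Fm])
  also have "\<dots> = (\<Sum>j<4. ennreal (a j) * (\<integral>\<^sup>+x. ennreal (V (g j x)) \<partial>\<mu>))"
    by (simp add: nn_integral_distr[OF gmu] Fm)
  also have "\<dots> = (\<Sum>j<4. (\<integral>\<^sup>+x. ennreal (a j) * ennreal (V (g j x)) \<partial>\<mu>))"
  proof (rule sum.cong[OF refl])
    fix j show "ennreal (a j) * (\<integral>\<^sup>+x. ennreal (V (g j x)) \<partial>\<mu>) = (\<integral>\<^sup>+x. ennreal (a j) * ennreal (V (g j x)) \<partial>\<mu>)"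
      by (rule nn_integral_cmult[symmetric]) measurable
  qed
  also have "\<dots> = (\<integral>\<^sup>+x. (\<Sum>j<4. ennreal (a j) * ennreal (V (g j x))) \<partial>\<mu>)"
    by (rule nn_integral_sum[symmetric]) measurable
  also have "\<dots> = (\<integral>\<^sup>+x. ennreal (PVf x) \<partial>\<mu>)"
    unfolding PVf_def using a V0 by (simp add: ennreal_mult[symmetric])
  finally have eq1: "(\<integral>\<^sup>+x. ennreal (V x) \<partial>\<mu>) = (\<integral>\<^sup>+x. ennreal (PVf x) \<partial>\<mu>)" .
  have "(\<integral>\<^sup>+x. ennreal (V x) \<partial>\<mu>) = (\<integral>\<^sup>+x. ennreal (PVf x) + ennreal (V x - PVf x) \<partial>\<mu>)"
    using PV PV0 by (intro nn_integral_cong) (simp add: PVf_def ennreal_plus[symmetric])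
  also have "\<dots> = (\<integral>\<^sup>+x. ennreal (PVf x) \<partial>\<mu>) + (\<integral>\<^sup>+x. ennreal (V x - PVf x) \<partial>\<mu>)"
    by (rule nn_integral_add) measurable
  finally have eq2: "(\<integral>\<^sup>+x. ennreal (PVf x) \<partial>\<mu>) + 0 = (\<integral>\<^sup>+x. ennreal (PVf x) \<partial>\<mu>) + (\<integral>\<^sup>+x. ennreal (V x - PVf x) \<partial>\<mu>)"
    using eq1 by simp
  have "(\<integral>\<^sup>+x. ennreal (PVf x) \<partial>\<mu>) \<le> (\<integral>\<^sup>+x. 1 \<partial>\<mu>)"
    using PV V1 by (intro nn_integral_mono) (simp add: PVf_def, meson order.trans)
  also have "\<dots> = 1" using prob_space.emeasure_space_1[OF prob] by (simp add: sp)
  finally have fin: "(\<integral>\<^sup>+x. ennreal (PVf x) \<partial>\<mu>) \<noteq> \<infinity>"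
    using order.strict_trans1[OF _ ennreal_one_less_top] by (metis infinity_ennreal_def less_irrefl)
  have "(\<integral>\<^sup>+x. ennreal (V x - PVf x) \<partial>\<mu>) = 0"
    using eq2 fin ennreal_add_left_cancel by metis
  then have "AE x in \<mu>. ennreal (V x - PVf x) = 0"
    by (subst nn_integral_0_iff_AE[symmetric]) measurable
  then have "AE x in \<mu>. x \<notin> U"
    by (rule eventually_mono) (use PVU in \<open>fastforce simp: PVf_def ennreal_eq_0_iff\<close>)
  then show ?thesis
    by (subst AE_iff_measurable[symmetric, of U]) (auto simp: sets U sp)
qed



fun Vf :: "(nat \<Rightarrow> 'a \<Rightarrow> 'a) \<Rightarrow> ('a \<Rightarrow> real) \<Rightarrow> (nat \<Rightarrow> real) \<Rightarrow> nat \<Rightarrow> 'a \<Rightarrow> real" where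
  "Vf g l x 0 p = 1"
| "Vf g l x (Suc n) p = (if \<exists>j<4. l (g j p) \<le> l p - 1
      then (\<Sum>j<4. if l (g j p) \<le> l p - 1 then x j * Vf g l x n (g j p) else 0) else 1)"

definition Vd :: "(nat \<Rightarrow> 'a \<Rightarrow> 'a) \<Rightarrow> ('a \<Rightarrow> real) \<Rightarrow> (nat \<Rightarrow> real) \<Rightarrow> 'a \<Rightarrow> real" where
  "Vd g l x p = Vf g l x (nat \<lceil>l p\<rceil>) p"

context
  fixes g :: "nat \<Rightarrow> 'a::topological_space \<Rightarrow> 'a" and l :: "'a \<Rightarrow> real" and Rp :: "nat \<Rightarrow> 'a set" and x :: "nat \<Rightarrow> real"
  assumes lnn: "\<And>p. 0 \<le> l p"
    and ginv: "\<And>j p. j < 4 \<Longrightarrow> g (bar j) (g j p) = p"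
    and expd: "\<And>j p. j < 4 \<Longrightarrow> 0 < l p \<Longrightarrow> p \<notin> Rp j \<Longrightarrow> l p + 1 \<le> l (g j p)"
    and disj: "\<And>i j p. i < 4 \<Longrightarrow> j < 4 \<Longrightarrow> 0 < l p \<Longrightarrow> p \<in> Rp i \<Longrightarrow> p \<in> Rp j \<Longrightarrow> i = j"
    and xpos: "\<And>j. 0 < x j" and x1: "\<And>j. x j \<le> 1"
begin

lemma drop_far: "j < 4 \<Longrightarrow> l (g j p) \<le> l p - 1 \<Longrightarrow> 1 \<le> l p \<and> p \<in> Rp j"
proof -
  assume j: "j < 4" and d: "l (g j p) \<le> l p - 1"
  have "1 \<le> l p" using lnn[of "g j p"] d by linarith
  moreover have "p \<in> Rp j"
  proof (rule ccontr)
    assume "p \<notin> Rp j"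
    then have "l p + 1 \<le> l (g j p)" using expd[OF j] \<open>1 \<le> l p\<close> by simp
    then show False using d by linarith
  qed
  ultimately show ?thesis by simp
qed

lemma drop_unique: "i < 4 \<Longrightarrow> j < 4 \<Longrightarrow> l (g i p) \<le> l p - 1 \<Longrightarrow> l (g j p) \<le> l p - 1 \<Longrightarrow> i = j"
proof -
  assume a: "i < 4" "j < 4" "l (g i p) \<le> l p - 1" "l (g j p) \<le> l p - 1"
  have "1 \<le> l p" "p \<in> Rp i" using drop_far[OF a(1) a(3)] by auto
  moreover have "p \<in> Rp j" using drop_far[OF a(2) a(4)] by auto
  ultimately show "i = j" using disj[OF a(1) a(2), of p] by linarith
qed

lemma sum_collapse:
  assumes j: "j < 4" and d: "l (g j p) \<le> l p - 1"
  shows "(\<Sum>i<4. if l (g i p) \<le> l p - 1 then x i * F i else 0) = x j * F j"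
proof -
  have "(\<Sum>i<4. if l (g i p) \<le> l p - 1 then x i * F i else 0) = (\<Sum>i<4. if i = j then x i * F i else 0)"
  proof (rule sum.cong[OF refl])
    fix i assume "i \<in> {..<4::nat}"
    then have i: "i < 4" by simp
    show "(if l (g i p) \<le> l p - 1 then x i * F i else 0) = (if i = j then x i * F i else 0)"
    proof (cases "i = j")
      case True
      then show ?thesis using d by simp
    next
      case False
      then have "\<not> l (g i p) \<le> l p - 1" using drop_unique[OF i j _ d] by blast
      then show ?thesis using False by simp
    qed
  qed
  also have "\<dots> = x j * F j" using j by simp
  finally show ?thesis .
qed

lemma Vf_stable: "l p \<le> real n \<Longrightarrow> l p \<le> real m \<Longrightarrow> Vf g l x n p = Vf g l x m p"
proof (induction n arbitrary: m p)
  case 0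
  then have nd: "\<not> (\<exists>j<4. l (g j p) \<le> l p - 1)" using drop_far by force
  show ?case using nd by (cases m) simp_all
next
  case (Suc n)
  show ?case
  proof (cases "\<exists>j<4. l (g j p) \<le> l p - 1")
    case False
    then show ?thesis by (cases m) simp_all
  next
    case True
    then obtain j where j: "j < 4" "l (g j p) \<le> l p - 1" by blast
    have "1 \<le> l p" using drop_far[OF j] by simp
    then obtain m' where m: "m = Suc m'" using Suc.prems(2) by (cases m) auto
    have "Vf g l x (Suc n) p = x j * Vf g l x n (g j p)"
      using True sum_collapse[OF j] by simp
    also have "\<dots> = x j * Vf g l x m' (g j p)"
      using Suc.IH[of "g j p" m'] Suc.prems j m by simp
    also have "\<dots> = Vf g l x m p"
      using True sum_collapse[OF j] m by simp
    finally show ?thesis .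
  qed
qed

lemma Vd_drop: "j < 4 \<Longrightarrow> l (g j p) \<le> l p - 1 \<Longrightarrow> Vd g l x p = x j * Vd g l x (g j p)"
proof -
  assume j: "j < 4" and d: "l (g j p) \<le> l p - 1"
  have "1 \<le> l p" using drop_far[OF j d] by simp
  define n where "n = nat \<lceil>l p\<rceil> - 1"
  have nn: "nat \<lceil>l p\<rceil> = Suc n" using \<open>1 \<le> l p\<close> unfolding n_def by linarith
  have ln: "l p - 1 \<le> real n" unfolding n_def using \<open>1 \<le> l p\<close> by linarith
  have "Vd g l x p = x j * Vf g l x n (g j p)"
    unfolding Vd_def nn using sum_collapse[OF j d] j d by auto
  also have "Vf g l x n (g j p) = Vd g l x (g j p)"
    unfolding Vd_def using ln d by (intro Vf_stable) linarith+
  finally show ?thesis .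
qed

lemma Vd_nodrop: "\<not> (\<exists>j<4. l (g j p) \<le> l p - 1) \<Longrightarrow> Vd g l x p = 1"
  unfolding Vd_def by (cases "nat \<lceil>l p\<rceil>") simp_all

lemma Vf_bounds: "0 < Vf g l x n p \<and> Vf g l x n p \<le> 1"
proof (induction n arbitrary: p)
  case 0
  then show ?case by simp
next
  case (Suc n)
  show ?case
  proof (cases "\<exists>j<4. l (g j p) \<le> l p - 1")
    case False
    then show ?thesis by simp
  next
    case True
    then obtain j where j: "j < 4" "l (g j p) \<le> l p - 1" by blast
    have "Vf g l x (Suc n) p = x j * Vf g l x n (g j p)"
      using True sum_collapse[OF j] by simp
    moreover have "0 < x j * Vf g l x n (g j p)" using xpos Suc.IH by simp
    moreover have "x j * Vf g l x n (g j p) \<le> 1" using xpos x1 Suc.IH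
      by (metis mult_le_one less_imp_le)
    ultimately show ?thesis by simp
  qed
qed

lemma Vd_pos: "0 < Vd g l x p" and Vd_le1: "Vd g l x p \<le> 1"
  using Vf_bounds unfolding Vd_def by auto

lemma expand_drop: "j < 4 \<Longrightarrow> 0 < l p \<Longrightarrow> p \<notin> Rp j \<Longrightarrow> Vd g l x (g j p) = x (bar j) * Vd g l x p"
proof -
  assume j: "j < 4" and p: "0 < l p" "p \<notin> Rp j"
  have "l p + 1 \<le> l (g j p)" using expd[OF j p] .
  then have "l (g (bar j) (g j p)) \<le> l (g j p) - 1" using ginv[OF j] by simp
  then show ?thesis using Vd_drop[OF bar_lt[OF j]] ginv[OF j] by simp
qed

lemma Vf_meas:
  assumes lm[measurable]: "l \<in> borel_measurable borel" and gm[measurable]: "\<And>j. g j \<in> borel \<rightarrow>\<^sub>M borel"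
  shows "Vf g l x n \<in> borel_measurable borel"
proof (induction n)
  case 0
  have "Vf g l x 0 = (\<lambda>p. 1)" by (rule ext) simp
  then show ?case by simp
next
  case (Suc n)
  note [measurable] = Suc.IH
  have "Vf g l x (Suc n) = (\<lambda>p. if \<exists>j<4. l (g j p) \<le> l p - 1
      then (\<Sum>j<4. if l (g j p) \<le> l p - 1 then x j * Vf g l x n (g j p) else 0) else 1)"
    by (rule ext) simp
  also have "\<dots> \<in> borel_measurable borel" by measurable
  finally show ?case .
qed

lemma Vd_meas:
  assumes lm[measurable]: "l \<in> borel_measurable borel" and gm[measurable]: "\<And>j. g j \<in> borel \<rightarrow>\<^sub>M borel"
  shows "Vd g l x \<in> borel_measurable borel"
proof (rule borel_measurable_LIMSEQ_metric[where f = "\<lambda>n. Vf g l x n"])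
  fix i show "Vf g l x i \<in> borel_measurable borel" by (rule Vf_meas[OF lm gm])
next
  fix p :: 'a
  show "(\<lambda>i. Vf g l x i p) \<longlonglongrightarrow> Vd g l x p"
  proof (rule tendsto_eventually)
    show "\<forall>\<^sub>F i in sequentially. Vf g l x i p = Vd g l x p"
      unfolding eventually_sequentially Vd_def
    proof (intro exI allI impI)
      fix n assume "nat \<lceil>l p\<rceil> \<le> n"
      then have "l p \<le> real n" by linarith
      moreover have "l p \<le> real (nat \<lceil>l p\<rceil>)" by linarith
      ultimately show "Vf g l x n p = Vf g l x (nat \<lceil>l p\<rceil>) p" by (rule Vf_stable)
    qed
  qed
qed

context
  fixes a :: "nat \<Rightarrow> real"
  assumes apos: "\<And>j. j < 4 \<Longrightarrow> 0 < a j" and asum: "(\<Sum>j<4. a j) = 1"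
    and zc: "\<And>k. k < 4 \<Longrightarrow> (\<Sum>j\<in>{..<4} - {k}. a j * x (bar j)) + a k / x k < 1"
    and xl1: "\<And>j. x j < 1"
begin

lemma PV_drop:
  assumes k: "k < 4" and d: "l (g k p) \<le> l p - 1"
  shows "(\<Sum>j<4. a j * Vd g l x (g j p)) < Vd g l x p"
proof -
  have lp: "0 < l p" using drop_far[OF k d] by simp
  have pk: "p \<in> Rp k" using drop_far[OF k d] by simp
  have oth: "\<And>j. j \<in> {..<4} - {k} \<Longrightarrow> a j * Vd g l x (g j p) = Vd g l x p * (a j * x (bar j))"
  proof -
    fix j assume "j \<in> {..<4} - {k}"
    then have j: "j < 4" "j \<noteq> k" by auto
    have "p \<notin> Rp j" using disj[OF k j(1) lp pk] j(2) by auto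
    then show "a j * Vd g l x (g j p) = Vd g l x p * (a j * x (bar j))"
      using expand_drop[OF j(1) lp] by simp
  qed
  have kk: "a k * Vd g l x (g k p) = Vd g l x p * (a k / x k)"
    using Vd_drop[OF k d] xpos[of k] by (simp add: field_simps)
  have "(\<Sum>j<4. a j * Vd g l x (g j p)) = a k * Vd g l x (g k p) + (\<Sum>j\<in>{..<4} - {k}. a j * Vd g l x (g j p))"
    using k by (subst sum.remove[of _ k]) auto
  also have "\<dots> = Vd g l x p * (a k / x k + (\<Sum>j\<in>{..<4} - {k}. a j * x (bar j)))"
  proof -
    have "(\<Sum>j\<in>{..<4} - {k}. a j * Vd g l x (g j p)) = (\<Sum>j\<in>{..<4} - {k}. Vd g l x p * (a j * x (bar j)))"
      by (rule sum.cong[OF refl]) (rule oth)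
    then show ?thesis using kk by (simp add: sum_distrib_left[symmetric] distrib_left)
  qed
  also have "\<dots> < Vd g l x p * 1"
    using zc[OF k] Vd_pos by (intro mult_strict_left_mono) auto
  finally show ?thesis by simp
qed

lemma PV_nodrop:
  assumes nd: "\<not> (\<exists>j<4. l (g j p) \<le> l p - 1)"
  shows "(\<Sum>j<4. a j * Vd g l x (g j p)) \<le> Vd g l x p"
    and "0 < l p \<Longrightarrow> (\<Sum>j<4. a j * Vd g l x (g j p)) < Vd g l x p"
proof -
  have V1: "Vd g l x p = 1" using Vd_nodrop[OF nd] .
  have "(\<Sum>j<4. a j * Vd g l x (g j p)) \<le> (\<Sum>j<4. a j * 1)"
    using apos Vd_le1 by (intro sum_mono mult_left_mono) (auto simp: less_imp_le)
  then show "(\<Sum>j<4. a j * Vd g l x (g j p)) \<le> Vd g l x p" using V1 asum by simp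
  assume lp: "0 < l p"
  obtain j0 where j0: "j0 < 4" "p \<notin> Rp j0"
  proof (cases "p \<in> Rp 0")
    case True
    then have "p \<notin> Rp 1" using disj[of 0 1 p] lp by auto
    then show ?thesis using that[of 1] by simp
  next
    case False
    then show ?thesis using that[of 0] by simp
  qed
  have e: "Vd g l x (g j0 p) = x (bar j0)" using expand_drop[OF j0(1) lp j0(2)] V1 by simp
  have "(\<Sum>j<4. a j * Vd g l x (g j p)) = a j0 * Vd g l x (g j0 p) + (\<Sum>j\<in>{..<4} - {j0}. a j * Vd g l x (g j p))"
    using j0 by (subst sum.remove[of _ j0]) auto
  also have "\<dots> \<le> a j0 * x (bar j0) + (\<Sum>j\<in>{..<4} - {j0}. a j)"
    using e apos Vd_le1 by (intro add_mono sum_mono) (auto intro: mult_right_le_one_le less_imp_le)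
  also have "(\<Sum>j\<in>{..<4} - {j0}. a j) = 1 - a j0"
    using asum j0 by (subst (asm) sum.remove[of _ j0]) auto
  also have "a j0 * x (bar j0) + (1 - a j0) < 1"
    using apos[OF j0(1)] xl1[of "bar j0"] by (simp add: mult_less_cancel_left2 algebra_simps)
  finally show "(\<Sum>j<4. a j * Vd g l x (g j p)) < Vd g l x p" using V1 by simp
qed

lemma PV_le: "(\<Sum>j<4. a j * Vd g l x (g j p)) \<le> Vd g l x p"
  using PV_drop PV_nodrop(1) by (meson less_imp_le)

lemma PV_lt: "0 < l p \<Longrightarrow> (\<Sum>j<4. a j * Vd g l x (g j p)) < Vd g l x p"
  using PV_drop PV_nodrop(2) by meson

end

end



lemma zc_generic:
  fixes A B C D e :: real
  assumes "0 < A" "0 < B" "0 < C" "0 < D" "0 < e" "2 * e \<le> A"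
  shows "C * (1 - e / D) + D * (1 - e / C) + B * (1 - e / A) + A / (1 - e / A) < A + B + C + D"
proof -
  have "2 \<le> C / D + D / C"
  proof -
    have "0 \<le> (C - D)^2" by simp
    then have "2 * C * D \<le> C * C + D * D" by (simp add: power2_eq_square algebra_simps)
    then show ?thesis using assms(3,4) by (simp add: field_simps)
  qed
  then have "2 * e \<le> e * (C / D + D / C)" using assms(5) by simp
  then have 1: "C * (1 - e / D) + D * (1 - e / C) \<le> C + D - 2 * e"
    using assms(3,4) by (simp add: algebra_simps)
  have 2: "B * (1 - e / A) < B" using assms(1,2,5) by (simp add: algebra_simps)
  have "A - e > 0" using assms by simp
  have "A / (1 - e / A) = A * A / (A - e)" using assms(1) by (simp add: field_simps)
  also have "\<dots> \<le> A + 2 * e"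
  proof -
    have "A * A \<le> (A + 2 * e) * (A - e)"
    proof -
      have "2 * e * e \<le> A * e" using assms(5,6) by (simp add: mult_right_mono)
      then show ?thesis by (simp add: algebra_simps)
    qed
    then show ?thesis using \<open>A - e > 0\<close> by (simp add: divide_le_eq)
  qed
  finally have 3: "A / (1 - e / A) \<le> A + 2 * e" .
  show ?thesis using 1 2 3 by linarith
qed

lemma weights_exist:
  fixes a :: "nat \<Rightarrow> real"
  assumes apos: "\<And>j. j < 4 \<Longrightarrow> 0 < a j" and asum: "(\<Sum>j<4. a j) = 1"
  shows "\<exists>x. (\<forall>j. 0 < x j \<and> x j < 1) \<and>
    (\<forall>k<4. (\<Sum>j\<in>{..<4} - {k}. a j * x (bar j)) + a k / x k < 1)"
proof -
  define e where "e = min (min (a 0) (a 1)) (min (a 2) (a 3)) / 2"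
  have a0: "0 < a 0" "0 < a 1" "0 < a 2" "0 < a 3" using apos by auto
  have e0: "0 < e" using a0 by (simp add: e_def)
  have ea: "2 * e \<le> a j" if "j < 4" for j
    using that a0 by (auto simp: e_def dest!: lt4_cases)
  define x where "x j = (if j < 4 then 1 - e / a j else 1 / 2)" for j
  have xb: "0 < x j \<and> x j < 1" for j
  proof (cases "j < 4")
    case True
    then have "e / a j < 1" using ea[OF True] apos[OF True] e0 by (simp add: divide_less_eq)
    moreover have "0 < e / a j" using apos[OF True] e0 by simp
    ultimately show ?thesis using True by (simp add: x_def)
  qed (simp add: x_def)
  have s: "(\<Sum>j<4. a j) = a 0 + a 1 + a 2 + a 3" by (simp add: numeral_eq_Suc)
  have rem: "\<And>k. k < 4 \<Longrightarrow> {..<4::nat} - {k} = {j. j < 4 \<and> j \<noteq> k}" by auto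
  have zc: "(\<Sum>j\<in>{..<4} - {k}. a j * x (bar j)) + a k / x k < 1" if k: "k < 4" for k
  proof -
    have "k = 0 \<or> k = 1 \<or> k = 2 \<or> k = 3" using k by auto
    moreover
    { assume "k = 0"
      then have "{..<4::nat} - {k} = {1, 2, 3}" by auto
      then have "(\<Sum>j\<in>{..<4} - {k}. a j * x (bar j)) + a k / x k =
        a 1 * (1 - e / a 3) + a 3 * (1 - e / a 1) + a 2 * (1 - e / a 0) + a 0 / (1 - e / a 0)"
        using \<open>k = 0\<close> by (simp add: x_def bar_def)
      also have "\<dots> < a 0 + a 2 + a 1 + a 3"
        by (rule zc_generic) (use a0 e0 ea[of 0] in auto)
      finally have ?thesis using asum s by simp }
    moreover
    { assume "k = 1"
      then have "{..<4::nat} - {k} = {0, 2, 3}" by auto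
      then have "(\<Sum>j\<in>{..<4} - {k}. a j * x (bar j)) + a k / x k =
        a 0 * (1 - e / a 2) + a 2 * (1 - e / a 0) + a 3 * (1 - e / a 1) + a 1 / (1 - e / a 1)"
        using \<open>k = 1\<close> by (simp add: x_def bar_def) (simp add: numeral_2_eq_2)
      also have "\<dots> < a 1 + a 3 + a 0 + a 2"
        by (rule zc_generic) (use a0 e0 ea[of 1] in auto)
      finally have ?thesis using asum s by simp }
    moreover
    { assume "k = 2"
      then have "{..<4::nat} - {k} = {0, 1, 3}" by auto
      then have "(\<Sum>j\<in>{..<4} - {k}. a j * x (bar j)) + a k / x k =
        a 1 * (1 - e / a 3) + a 3 * (1 - e / a 1) + a 0 * (1 - e / a 2) + a 2 / (1 - e / a 2)"
        using \<open>k = 2\<close> by (simp add: x_def bar_def) (simp add: numeral_2_eq_2)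
      also have "\<dots> < a 2 + a 0 + a 1 + a 3"
        by (rule zc_generic) (use a0 e0 ea[of 2] in auto)
      finally have ?thesis using asum s by simp }
    moreover
    { assume "k = 3"
      then have "{..<4::nat} - {k} = {0, 1, 2}" by auto
      then have "(\<Sum>j\<in>{..<4} - {k}. a j * x (bar j)) + a k / x k =
        a 0 * (1 - e / a 2) + a 2 * (1 - e / a 0) + a 1 * (1 - e / a 3) + a 3 / (1 - e / a 3)"
        using \<open>k = 3\<close> by (simp add: x_def bar_def) (simp add: numeral_2_eq_2)
      also have "\<dots> < a 3 + a 1 + a 0 + a 2"
        by (rule zc_generic) (use a0 e0 ea[of 3] in auto)
      finally have ?thesis using asum s by simp }
    ultimately show ?thesis by blast
  qed
  show ?thesis using xb zc by blast
qed



lemma henon_eq: "henon P \<delta> = (\<lambda>p. (snd p, poly P (snd p) - \<delta> * fst p))"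
  by (auto simp: henon_def fun_eq_iff split: prod.split)
lemma kinv_eq: "kinv P \<delta> = (\<lambda>p. ((poly P (fst p) - snd p) * inverse \<delta>, fst p))"
  by (auto simp: kinv_def fun_eq_iff divide_inverse split: prod.split)
lemma rot_eq: "rot t = (\<lambda>p. (complex_of_real (cos t) * fst p - complex_of_real (sin t) * snd p,
                       complex_of_real (sin t) * fst p + complex_of_real (cos t) * snd p))"
  by (auto simp: rot_def fun_eq_iff split: prod.split)

lemma cont_henon: "continuous_on UNIV (henon P \<delta>)"
  unfolding henon_eq by (intro continuous_intros)
lemma cont_kinv: "continuous_on UNIV (kinv P \<delta>)"
  unfolding kinv_eq by (intro continuous_intros)
lemma cont_rot: "continuous_on UNIV (rot t)"
  unfolding rot_eq by (intro continuous_intros)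

lemma cont_comp3: "continuous_on UNIV f \<Longrightarrow> continuous_on UNIV h \<Longrightarrow> continuous_on UNIV k \<Longrightarrow>
  continuous_on UNIV (f \<circ> h \<circ> k)"
  by (metis continuous_on_compose continuous_on_subset subset_UNIV)

lemma cont_gmap: "continuous_on UNIV (gmap P \<delta> t j)"
proof -
  have "gmap P \<delta> t j \<in> {henon P \<delta>, rot (-t) \<circ> henon P \<delta> \<circ> rot t, kinv P \<delta>, rot (-t) \<circ> kinv P \<delta> \<circ> rot t}"
    unfolding gmap_def by simp
  moreover have "continuous_on UNIV (rot (-t) \<circ> henon P \<delta> \<circ> rot t)"
    by (intro cont_comp3 cont_henon cont_rot)
  moreover have "continuous_on UNIV (rot (-t) \<circ> kinv P \<delta> \<circ> rot t)"
    by (intro cont_comp3 cont_kinv cont_rot)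
  ultimately show ?thesis using cont_henon[of P \<delta>] cont_kinv[of P \<delta>] by auto
qed

lemma cont_NN: "continuous_on UNIV NN"
  unfolding NN_def by (intro continuous_intros)

lemma NN_zero: "NN 0 = 0" by (simp add: NN_def zero_prod_def)

lemma supp_compact:
  fixes \<mu> :: "(complex \<times> complex) measure"
  assumes null: "emeasure \<mu> {p. R < NN p} = 0"
  shows "compact (measure_support \<mu>)"
proof -
  have opU: "open {p. R < NN p}" by (rule open_Collect_less) (use cont_NN in \<open>auto intro: continuous_intros\<close>)
  have sub: "measure_support \<mu> \<subseteq> {p. NN p \<le> R}"
  proof
    fix p assume p: "p \<in> measure_support \<mu>"
    show "p \<in> {p. NN p \<le> R}"
    proof (rule ccontr)
      assume "p \<notin> {p. NN p \<le> R}"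
      then have "p \<in> {p. R < NN p}" by simp
      then have "emeasure \<mu> {p. R < NN p} > 0" using p opU by (auto simp: measure_support_def)
      then show False using null by simp
    qed
  qed
  have "bounded {p :: complex \<times> complex. NN p \<le> R}"
    unfolding bounded_iff
  proof (intro exI ballI)
    fix p :: "complex \<times> complex" assume "p \<in> {p. NN p \<le> R}"
    then have "norm (fst p) \<le> R" "norm (snd p) \<le> R" by (auto simp: NN_def)
    moreover have "norm p \<le> norm (fst p) + norm (snd p)" using norm_Pair_le[of "fst p" "snd p"] by simp
    ultimately show "norm p \<le> 2 * R" by linarith
  qed
  then have bd: "bounded (measure_support \<mu>)" using sub bounded_subset by blast
  have "open (- measure_support \<mu>)"
    unfolding open_subopen[of "- measure_support \<mu>"]
  proof
    fix p assume "p \<in> - measure_support \<mu>"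
    then obtain U where U: "open U" "p \<in> U" "\<not> emeasure \<mu> U > 0" by (auto simp: measure_support_def)
    have "U \<subseteq> - measure_support \<mu>" using U by (auto simp: measure_support_def)
    then show "\<exists>T. open T \<and> p \<in> T \<and> T \<subseteq> - measure_support \<mu>" using U by blast
  qed
  then have "closed (measure_support \<mu>)" by (simp add: closed_def)
  then show ?thesis using bd by (simp add: compact_eq_bounded_closed)
qed



lemma sum_4: "(\<Sum>j<4::nat. F j) = F 0 + F 1 + F 2 + F 3"
proof -
  have "{..<4::nat} = {0, 1, 2, 3}" by auto
  then show ?thesis by (simp add: add.assoc)
qed

theorem theoremB:
  fixes P :: "complex poly" and \<delta> :: complex and \<theta> :: real
    and a1 a2 a3 a4 :: real and \<mu> :: "(complex \<times> complex) measure"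
  defines "h1 \<equiv> henon P \<delta>"
  defines "h2 \<equiv> inv (rot \<theta>) \<circ> henon P \<delta> \<circ> rot \<theta>"
  assumes "degree P \<ge> 2"
    and "\<delta> \<noteq> 0"
    and "0 < \<theta>" and "\<theta> < 2 * pi"
    and "\<theta> \<notin> {pi / 2, pi, 3 * pi / 2}"
    and "a1 > 0" and "a2 > 0" and "a3 > 0" and "a4 > 0"
    and "a1 + a2 + a3 + a4 = 1"
    and "sets \<mu> = sets borel"
    and "prob_space \<mu>"
    and "\<forall>A \<in> sets borel.
           emeasure \<mu> A =
             ennreal a1 * emeasure (distr \<mu> borel h1) A
           + ennreal a2 * emeasure (distr \<mu> borel h2) A
           + ennreal a3 * emeasure (distr \<mu> borel (inv h1)) A
           + ennreal a4 * emeasure (distr \<mu> borel (inv h2)) A"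
  shows "compact (measure_support \<mu>)"
proof -
  have deg: "degree P \<ge> 2" and d0: "\<delta> \<noteq> 0" using assms by auto
  have th: "0 < \<theta>" "\<theta> < 2 * pi" "\<theta> \<notin> {pi / 2, pi, 3 * pi / 2}" using assms by auto
  have s0: "sin \<theta> \<noteq> 0"
  proof
    assume "sin \<theta> = 0"
    then obtain i :: int where i: "\<theta> = of_int i * pi" by (auto simp: sin_zero_iff_int2)
    have "0 < of_int i * pi" "of_int i * pi < 2 * pi" using th i by auto
    then have "0 < real_of_int i" "real_of_int i < 2"
      using pi_gt_zero by (simp_all add: zero_less_mult_iff mult_less_cancel_right)
    then have "i = 1" by linarith
    then show False using i th by simp
  qed
  have c0: "cos \<theta> \<noteq> 0"
  proof
    assume "cos \<theta> = 0"
    then obtain n :: int where n: "\<theta> = of_int n * pi + pi / 2" by (auto simp: cos_zero_iff_int2)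
    have "0 < (of_int n + 1/2) * pi" "(of_int n + 1/2) * pi < 2 * pi" using th n by (auto simp: algebra_simps)
    then have "0 < real_of_int n + 1/2" "real_of_int n + 1/2 < 2"
      using pi_gt_zero by (simp_all add: zero_less_mult_iff mult_less_cancel_right del: of_int_add)
    then have "n = 0 \<or> n = 1" by linarith
    then show False using n th by (auto simp: algebra_simps)
  qed
  define k where "k = min \<bar>sin \<theta>\<bar> \<bar>cos \<theta>\<bar> / 4"
  have k0: "0 < k" by (rule k_pos[OF s0 c0 k_def])
  have k1: "k < 1" using k_le[OF s0 c0 k_def] by simp
  obtain R where R0: "R > 0" and Rexp: "\<forall>j<4. \<forall>p. R < NN p \<longrightarrow> p \<notin> Rep k \<theta> j \<longrightarrow> NN p + 1 \<le> NN (gmap P \<delta> \<theta> j p)"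
    using expand_all[OF deg d0 k0 k1] by blast
  define g where "g = gmap P \<delta> \<theta>"
  define l where "l p = (if R < NN p then NN p else 0)" for p
  define wt where "wt j = (if j = 0 then a1 else if j = 1 then a2 else if j = 2 then a3 else a4)" for j :: nat
  have apos: "\<And>j. j < 4 \<Longrightarrow> 0 < wt j" using assms by (simp add: wt_def)
  have anonneg: "\<And>j. 0 \<le> wt j" using assms by (simp add: wt_def)
  have asum: "(\<Sum>j<4. wt j) = 1" using assms by (simp add: sum_4 wt_def)
  obtain x where xb: "\<forall>j. 0 < x j \<and> x j < 1"
    and zc: "\<forall>i<4. (\<Sum>j\<in>{..<4} - {i}. wt j * x (bar j)) + wt i / x i < 1"
    using weights_exist[OF apos asum] by blast
  have zc': "\<And>i. i < 4 \<Longrightarrow> (\<Sum>j\<in>{..<4} - {i}. wt j * x (bar j)) + wt i / x i < 1" using zc by blast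
  have xpos: "\<And>j. 0 < x j" and x1: "\<And>j. x j \<le> 1" and xl1: "\<And>j. x j < 1" using xb less_imp_le by auto
  have lnn: "\<And>p. 0 \<le> l p" by (simp add: l_def NN_nonneg)
  have lpos: "\<And>p. 0 < l p \<longleftrightarrow> R < NN p" using R0 by (auto simp: l_def)
  have ginv: "\<And>j p. j < 4 \<Longrightarrow> g (bar j) (g j p) = p" using gmap_inv[OF d0] by (simp add: g_def)
  have expd: "\<And>j p. j < 4 \<Longrightarrow> 0 < l p \<Longrightarrow> p \<notin> Rep k \<theta> j \<Longrightarrow> l p + 1 \<le> l (g j p)"
  proof -
    fix j p assume j: "j < 4" and lp: "0 < l p" and pn: "p \<notin> Rep k \<theta> j"
    have Rp: "R < NN p" using lp lpos by simp
    have e: "NN p + 1 \<le> NN (g j p)" using Rexp[rule_format, OF j Rp pn] by (simp add: g_def)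
    then have "R < NN (g j p)" using Rp by simp
    then show "l p + 1 \<le> l (g j p)" using e Rp by (simp add: l_def)
  qed
  have disj: "\<And>i j p. i < 4 \<Longrightarrow> j < 4 \<Longrightarrow> 0 < l p \<Longrightarrow> p \<in> Rep k \<theta> i \<Longrightarrow> p \<in> Rep k \<theta> j \<Longrightarrow> i = j"
  proof -
    fix i j p assume ij: "i < 4" "j < 4" and lp: "0 < l p" and pi: "p \<in> Rep k \<theta> i" and pj: "p \<in> Rep k \<theta> j"
    have "R < NN p" using lp lpos by simp
    then have "p \<noteq> 0" using R0 NN_zero by auto
    then show "i = j" using Rep_disj[OF s0 c0 k_def _ ij pi pj] by simp
  qed
  have NNm[measurable]: "NN \<in> borel_measurable borel" by (rule borel_measurable_continuous_onI[OF cont_NN])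
  have lm: "l \<in> borel_measurable borel" unfolding l_def by measurable
  have gm: "\<And>j. g j \<in> borel \<rightarrow>\<^sub>M borel" by (simp add: g_def borel_measurable_continuous_onI cont_gmap)
  have PVle: "\<And>p. (\<Sum>j<4. wt j * Vd g l x (g j p)) \<le> Vd g l x p"
    using PV_le[where g=g and l=l and Rp="Rep k \<theta>" and x=x and a=wt, OF lnn ginv expd disj xpos x1 apos asum zc' xl1] .
  have PVlt: "\<And>p. 0 < l p \<Longrightarrow> (\<Sum>j<4. wt j * Vd g l x (g j p)) < Vd g l x p"
    using PV_lt[where g=g and l=l and Rp="Rep k \<theta>" and x=x and a=wt, OF lnn ginv expd disj xpos x1 apos asum zc' xl1] .
  have Vm: "Vd g l x \<in> borel_measurable borel"
    using Vd_meas[where g=g and l=l and Rp="Rep k \<theta>" and x=x, OF lnn ginv expd disj xpos x1 lm gm] .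
  have V0: "\<And>p. 0 \<le> Vd g l x p" using Vd_pos[where g=g and l=l and Rp="Rep k \<theta>" and x=x, OF lnn ginv expd disj xpos x1] by (simp add: less_imp_le)
  have V1: "\<And>p. Vd g l x p \<le> 1" using Vd_le1[where g=g and l=l and Rp="Rep k \<theta>" and x=x, OF lnn ginv expd disj xpos x1] .
  have g0: "g 0 = h1" by (simp add: g_def gmap_def h1_def)
  have g1: "g 1 = h2" by (simp add: g_def gmap_def h2_def inv_rot)
  have g2: "g 2 = inv h1" by (simp add: g_def gmap_def h1_def inv_henon[OF d0])
  have g3: "g 3 = inv h2" by (simp add: g_def gmap_def h2_def inv_rot inv_h2[OF d0])
  have st: "\<forall>A \<in> sets borel. emeasure \<mu> A = (\<Sum>j<4. ennreal (wt j) * emeasure (distr \<mu> borel (g j)) A)"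
    using assms(15) unfolding sum_4 by (simp add: g0 g1[simplified] g2 g3 wt_def)
  have Ueq: "{p. 0 < l p} = {p. R < NN p}" using lpos by auto
  have opU: "open {p. R < NN p}" by (rule open_Collect_less) (use cont_NN in \<open>auto intro: continuous_intros\<close>)
  have U: "{p. 0 < l p} \<in> sets borel" unfolding Ueq using opU by simp
  have "emeasure \<mu> {p. 0 < l p} = 0"
    by (rule lyap_null[OF assms(13) assms(14) gm anonneg st Vm V0 PVle U PVlt V1]) simp
  then show ?thesis unfolding Ueq by (rule supp_compact)
qed


end
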